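(* In a coherent differential summable resource category $\mathcal L$ (see context), call $f\in\mathcal L_!(X_0\&\cdots\&X_n,Y)$ $(n+1)$-linear if $f=\mathcal M(l)$ for some $l\in\mathcal L(X_0\otimes\cdots\otimes X_n,Y)$. If $f$ is $(n+1)$-linear, then $Df\in\mathcal L_!(SX_0\&\cdots\&SX_n,SY)$ is also $(n+1)$-linear.
   Context: $\mathcal L$ is a symmetric monoidal closed category with finite products ($\&$, projections $p_i$, terminal $\top$), resource comonad $(!,\mathrm{der},\mathrm{dig})$ and Seely isomorphisms $m^0,m^2$; $m^n\in\mathcal L(!X_0\otimes\cdots\otimes!X_n,!(X_0\&\cdots\&X_n))$ is the induced $(n+1)$-ary Seely isomorphism. Kleisli category $\mathcal L_!$: $\mathcal L_!(X,Y)=\mathcal L(!X,Y)$, $g\circ_!f=g\circ!f\circ\mathrm{dig}_X$. For $l\in\mathcal L(X_0\otimes\cdots\otimes X_n,Y)$, $\mathcal M(l)=l\circ(\mathrm{der}_{X_0}\otimes\cdots\otimes\mathrm{der}_{X_n})\circ(m^n)^{-1}$. $\mathcal L$ has zero morphisms and a summability structure $(S,\pi_0,\pi_1,\sigma)$ ($\pi_0,\pi_1$ jointly monic, $f_0+f_1=\sigma\langle f_0,f_1\rangle$) satisfying the axioms of Ehrhard's coherent differentiation (homsets partial commutative monoids, composition and $\otimes$ distribute over sums); $\iota_0=\langle\mathrm{id},0\rangle$; $\tau:S^2\Rightarrow S$ with $\pi_0\tau=\pi_0\pi_0$, $\pi_1\tau=\pi_1\pi_0+\pi_0\pi_1$;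 flip $c$ with $\pi_i\pi_jc=\pi_j\pi_i$; $S$ preserves products strictly; $L_{X_0,X_1}\in\mathcal L(SX_0\otimes SX_1,S(X_0\otimes X_1))$ with $\pi_0L=\pi_0\otimes\pi_0$, $\pi_1L=\pi_1\otimes\pi_0+\pi_0\otimes\pi_1$. A natural $\partial_X\in\mathcal L(!SX,S!X)$ satisfies: $\pi_0\partial_X=!\pi_0$; $\partial_X\circ!\iota_0=\iota_0$, $\tau\circ S\partial_X\circ\partial_{SX}=\partial_X\circ!\tau$; $S\mathrm{der}_X\circ\partial_X=\mathrm{der}_{SX}$, $S\mathrm{dig}_X\circ\partial_X=\partial_{!X}\circ!\partial_X\circ\mathrm{dig}_{SX}$; $S(m^0)^{-1}\partial_\top=\iota_0(m^0)^{-1}!0$, $S(m^2)^{-1}\partial_{X_0\&X_1}=L_{!X_0,!X_1}(\partial_{X_0}\otimes\partial_{X_1})(m^2_{SX_0,SX_1})^{-1}$; $c\circ S\partial_X\circ\partial_{SX}=S\partial_X\circ\partial_{SX}\circ!c$. $D$ is the functor on $\mathcal L_!$ with $DX=SX$, $Df=Sf\circ\partial_X$. *)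

theory Defs
  imports Main
begin

text \<open>A coherent differential summable resource category, encoded as a record of
  operations (objects of type 'o, morphisms of type 'a, typed via hom-sets)
  together with a predicate collecting all axioms.\<close>

record ('o, 'a) rcat =
  chom   :: "'o \<Rightarrow> 'o \<Rightarrow> 'a set"
  ccomp  :: "'a \<Rightarrow> 'a \<Rightarrow> 'a"      (* ccomp g f = g o f *)
  cid    :: "'o \<Rightarrow> 'a"
  ctens  :: "'o \<Rightarrow> 'o \<Rightarrow> 'o"
  ctensm :: "'a \<Rightarrow> 'a \<Rightarrow> 'a"
  cunit  :: "'o"
  cassoc :: "'o \<Rightarrow> 'o \<Rightarrow> 'o \<Rightarrow> 'a"
  clunit :: "'o \<Rightarrow> 'a"
  crunit :: "'o \<Rightarrow> 'a"
  csymm  :: "'o \<Rightarrow> 'o \<Rightarrow> 'a"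
  clolli :: "'o \<Rightarrow> 'o \<Rightarrow> 'o"
  ceval  :: "'o \<Rightarrow> 'o \<Rightarrow> 'a"
  cwith  :: "'o \<Rightarrow> 'o \<Rightarrow> 'o"
  cp0    :: "'o \<Rightarrow> 'o \<Rightarrow> 'a"
  cp1    :: "'o \<Rightarrow> 'o \<Rightarrow> 'a"
  cpair  :: "'a \<Rightarrow> 'a \<Rightarrow> 'a"
  ctop   :: "'o"
  cterm  :: "'o \<Rightarrow> 'a"
  cbang  :: "'o \<Rightarrow> 'o"
  cbangm :: "'a \<Rightarrow> 'a"
  cder   :: "'o \<Rightarrow> 'a"
  cdig   :: "'o \<Rightarrow> 'a"
  cm0    :: "'a"
  cm2    :: "'o \<Rightarrow> 'o \<Rightarrow> 'a"
  czero  :: "'o \<Rightarrow> 'o \<Rightarrow> 'a"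
  cS     :: "'o \<Rightarrow> 'o"
  cSm    :: "'a \<Rightarrow> 'a"
  cpi0   :: "'o \<Rightarrow> 'a"
  cpi1   :: "'o \<Rightarrow> 'a"
  csig   :: "'o \<Rightarrow> 'a"
  ctau   :: "'o \<Rightarrow> 'a"
  cflip  :: "'o \<Rightarrow> 'a"
  cL     :: "'o \<Rightarrow> 'o \<Rightarrow> 'a"
  cdiff  :: "'o \<Rightarrow> 'a"

definition is_iso :: "('o,'a) rcat \<Rightarrow> 'o \<Rightarrow> 'o \<Rightarrow> 'a \<Rightarrow> bool" where
  "is_iso C X Y f \<longleftrightarrow> f \<in> chom C X Y \<and>
     (\<exists>g \<in> chom C Y X. ccomp C g f = cid C X \<and> ccomp C f g = cid C Y)"

definition invm :: "('o,'a) rcat \<Rightarrow> 'o \<Rightarrow> 'o \<Rightarrow> 'a \<Rightarrow> 'a" where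
  "invm C X Y f = (THE g. g \<in> chom C Y X \<and> ccomp C g f = cid C X \<and> ccomp C f g = cid C Y)"

definition category_ax :: "('o,'a) rcat \<Rightarrow> bool" where
  "category_ax C \<longleftrightarrow>
    (\<forall>X. cid C X \<in> chom C X X) \<and>
    (\<forall>X Y Z f g. f \<in> chom C X Y \<longrightarrow> g \<in> chom C Y Z \<longrightarrow> ccomp C g f \<in> chom C X Z) \<and>
    (\<forall>X Y f. f \<in> chom C X Y \<longrightarrow> ccomp C f (cid C X) = f \<and> ccomp C (cid C Y) f = f) \<and>
    (\<forall>W X Y Z f g h. f \<in> chom C W X \<longrightarrow> g \<in> chom C X Y \<longrightarrow> h \<in> chom C Y Z \<longrightarrow>
        ccomp C h (ccomp C g f) = ccomp C (ccomp C h g) f)"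

definition smc_ax :: "('o,'a) rcat \<Rightarrow> bool" where
  "smc_ax C \<longleftrightarrow>
    (\<forall>X X' Y Y' f g. f \<in> chom C X Y \<longrightarrow> g \<in> chom C X' Y' \<longrightarrow>
        ctensm C f g \<in> chom C (ctens C X X') (ctens C Y Y')) \<and>
    (\<forall>X Y. ctensm C (cid C X) (cid C Y) = cid C (ctens C X Y)) \<and>
    (\<forall>X Y Z X' Y' Z' f g f' g'. f \<in> chom C X Y \<longrightarrow> g \<in> chom C Y Z \<longrightarrow>
        f' \<in> chom C X' Y' \<longrightarrow> g' \<in> chom C Y' Z' \<longrightarrow>
        ctensm C (ccomp C g f) (ccomp C g' f') = ccomp C (ctensm C g g') (ctensm C f f')) \<and>
    (\<forall>X Y Z. is_iso C (ctens C (ctens C X Y) Z) (ctens C X (ctens C Y Z)) (cassoc C X Y Z)) \<and>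
    (\<forall>X Y Z X' Y' Z' f g h. f \<in> chom C X X' \<longrightarrow> g \<in> chom C Y Y' \<longrightarrow> h \<in> chom C Z Z' \<longrightarrow>
        ccomp C (cassoc C X' Y' Z') (ctensm C (ctensm C f g) h)
        = ccomp C (ctensm C f (ctensm C g h)) (cassoc C X Y Z)) \<and>
    (\<forall>X. is_iso C (ctens C (cunit C) X) X (clunit C X)) \<and>
    (\<forall>X Y f. f \<in> chom C X Y \<longrightarrow>
        ccomp C f (clunit C X) = ccomp C (clunit C Y) (ctensm C (cid C (cunit C)) f)) \<and>
    (\<forall>X. is_iso C (ctens C X (cunit C)) X (crunit C X)) \<and>
    (\<forall>X Y f. f \<in> chom C X Y \<longrightarrow>
        ccomp C f (crunit C X) = ccomp C (crunit C Y) (ctensm C f (cid C (cunit C)))) \<and>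
    (\<forall>X Y. csymm C X Y \<in> chom C (ctens C X Y) (ctens C Y X)) \<and>
    (\<forall>X Y. ccomp C (csymm C Y X) (csymm C X Y) = cid C (ctens C X Y)) \<and>
    (\<forall>X Y X' Y' f g. f \<in> chom C X X' \<longrightarrow> g \<in> chom C Y Y' \<longrightarrow>
        ccomp C (csymm C X' Y') (ctensm C f g) = ccomp C (ctensm C g f) (csymm C X Y)) \<and>
    (\<forall>W X Y Z.
        ccomp C (cassoc C W X (ctens C Y Z)) (cassoc C (ctens C W X) Y Z)
        = ccomp C (ctensm C (cid C W) (cassoc C X Y Z))
            (ccomp C (cassoc C W (ctens C X Y) Z) (ctensm C (cassoc C W X Y) (cid C Z)))) \<and>
    (\<forall>X Y. ccomp C (ctensm C (cid C X) (clunit C Y)) (cassoc C X (cunit C) Y)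
        = ctensm C (crunit C X) (cid C Y)) \<and>
    (\<forall>X Y Z.
        ccomp C (cassoc C Y Z X) (ccomp C (csymm C X (ctens C Y Z)) (cassoc C X Y Z))
        = ccomp C (ctensm C (cid C Y) (csymm C X Z))
            (ccomp C (cassoc C Y X Z) (ctensm C (csymm C X Y) (cid C Z)))) \<and>
    (\<forall>X Y. ceval C X Y \<in> chom C (ctens C (clolli C X Y) X) Y) \<and>
    (\<forall>X Y Z f. f \<in> chom C (ctens C Z X) Y \<longrightarrow>
        (\<exists>!h. h \<in> chom C Z (clolli C X Y) \<and> ccomp C (ceval C X Y) (ctensm C h (cid C X)) = f))"

definition products_ax :: "('o,'a) rcat \<Rightarrow> bool" where
  "products_ax C \<longleftrightarrow>
    (\<forall>X Y. cp0 C X Y \<in> chom C (cwith C X Y) X \<and> cp1 C X Y \<in> chom C (cwith C X Y) Y) \<and>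
    (\<forall>X Y Z f g. f \<in> chom C Z X \<longrightarrow> g \<in> chom C Z Y \<longrightarrow>
        cpair C f g \<in> chom C Z (cwith C X Y) \<and>
        ccomp C (cp0 C X Y) (cpair C f g) = f \<and> ccomp C (cp1 C X Y) (cpair C f g) = g) \<and>
    (\<forall>X Y Z h. h \<in> chom C Z (cwith C X Y) \<longrightarrow>
        h = cpair C (ccomp C (cp0 C X Y) h) (ccomp C (cp1 C X Y) h)) \<and>
    (\<forall>X. cterm C X \<in> chom C X (ctop C)) \<and>
    (\<forall>X f. f \<in> chom C X (ctop C) \<longrightarrow> f = cterm C X)"

definition withm :: "('o,'a) rcat \<Rightarrow> 'o \<Rightarrow> 'o \<Rightarrow> 'a \<Rightarrow> 'a \<Rightarrow> 'a" where
  "withm C X Y f g = cpair C (ccomp C f (cp0 C X Y)) (ccomp C g (cp1 C X Y))"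

definition comonad_ax :: "('o,'a) rcat \<Rightarrow> bool" where
  "comonad_ax C \<longleftrightarrow>
    (\<forall>X Y f. f \<in> chom C X Y \<longrightarrow> cbangm C f \<in> chom C (cbang C X) (cbang C Y)) \<and>
    (\<forall>X. cbangm C (cid C X) = cid C (cbang C X)) \<and>
    (\<forall>X Y Z f g. f \<in> chom C X Y \<longrightarrow> g \<in> chom C Y Z \<longrightarrow>
        cbangm C (ccomp C g f) = ccomp C (cbangm C g) (cbangm C f)) \<and>
    (\<forall>X. cder C X \<in> chom C (cbang C X) X) \<and>
    (\<forall>X. cdig C X \<in> chom C (cbang C X) (cbang C (cbang C X))) \<and>
    (\<forall>X Y f. f \<in> chom C X Y \<longrightarrow> ccomp C (cder C Y) (cbangm C f) = ccomp C f (cder C X)) \<and>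
    (\<forall>X Y f. f \<in> chom C X Y \<longrightarrow>
        ccomp C (cdig C Y) (cbangm C f) = ccomp C (cbangm C (cbangm C f)) (cdig C X)) \<and>
    (\<forall>X. ccomp C (cder C (cbang C X)) (cdig C X) = cid C (cbang C X)) \<and>
    (\<forall>X. ccomp C (cbangm C (cder C X)) (cdig C X) = cid C (cbang C X)) \<and>
    (\<forall>X. ccomp C (cdig C (cbang C X)) (cdig C X) = ccomp C (cbangm C (cdig C X)) (cdig C X))"

text \<open>Seely isomorphisms: (!, m0, m2) is a strong symmetric monoidal functor from
  (L, &, T) to (L, (x), I), compatible with dig (Seely category / resource category).\<close>
definition seely_ax :: "('o,'a) rcat \<Rightarrow> bool" where
  "seely_ax C \<longleftrightarrow>
    is_iso C (cunit C) (cbang C (ctop C)) (cm0 C) \<and>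
    (\<forall>X Y. is_iso C (ctens C (cbang C X) (cbang C Y)) (cbang C (cwith C X Y)) (cm2 C X Y)) \<and>
    (\<forall>X Y X' Y' f g. f \<in> chom C X X' \<longrightarrow> g \<in> chom C Y Y' \<longrightarrow>
        ccomp C (cm2 C X' Y') (ctensm C (cbangm C f) (cbangm C g))
        = ccomp C (cbangm C (withm C X Y f g)) (cm2 C X Y)) \<and>
    (\<forall>X Y Z.
        ccomp C (cbangm C (cpair C (ccomp C (cp0 C X Y) (cp0 C (cwith C X Y) Z))
                               (cpair C (ccomp C (cp1 C X Y) (cp0 C (cwith C X Y) Z))
                                        (cp1 C (cwith C X Y) Z))))
          (ccomp C (cm2 C (cwith C X Y) Z) (ctensm C (cm2 C X Y) (cid C (cbang C Z))))
        = ccomp C (cm2 C X (cwith C Y Z))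
          (ccomp C (ctensm C (cid C (cbang C X)) (cm2 C Y Z))
                   (cassoc C (cbang C X) (cbang C Y) (cbang C Z)))) \<and>
    (\<forall>X. ccomp C (cbangm C (cp1 C (ctop C) X))
          (ccomp C (cm2 C (ctop C) X) (ctensm C (cm0 C) (cid C (cbang C X))))
        = clunit C (cbang C X)) \<and>
    (\<forall>X. ccomp C (cbangm C (cp0 C X (ctop C)))
          (ccomp C (cm2 C X (ctop C)) (ctensm C (cid C (cbang C X)) (cm0 C)))
        = crunit C (cbang C X)) \<and>
    (\<forall>X Y. ccomp C (cbangm C (cpair C (cp1 C X Y) (cp0 C X Y))) (cm2 C X Y)
        = ccomp C (cm2 C Y X) (csymm C (cbang C X) (cbang C Y))) \<and>
    (\<forall>X Y.
        ccomp C (invm C (ctens C (cbang C (cbang C X)) (cbang C (cbang C Y)))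
                        (cbang C (cwith C (cbang C X) (cbang C Y))) (cm2 C (cbang C X) (cbang C Y)))
          (ccomp C (cbangm C (cpair C (cbangm C (cp0 C X Y)) (cbangm C (cp1 C X Y))))
                   (cdig C (cwith C X Y)))
        = ccomp C (ctensm C (cdig C X) (cdig C Y))
            (invm C (ctens C (cbang C X) (cbang C Y)) (cbang C (cwith C X Y)) (cm2 C X Y)))"

definition summable :: "('o,'a) rcat \<Rightarrow> 'o \<Rightarrow> 'o \<Rightarrow> 'a \<Rightarrow> 'a \<Rightarrow> bool" where
  "summable C X Y f0 f1 \<longleftrightarrow> f0 \<in> chom C X Y \<and> f1 \<in> chom C X Y \<and>
     (\<exists>h \<in> chom C X (cS C Y). ccomp C (cpi0 C Y) h = f0 \<and> ccomp C (cpi1 C Y) h = f1)"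

definition spair :: "('o,'a) rcat \<Rightarrow> 'o \<Rightarrow> 'o \<Rightarrow> 'a \<Rightarrow> 'a \<Rightarrow> 'a" where
  "spair C X Y f0 f1 = (THE h. h \<in> chom C X (cS C Y) \<and>
      ccomp C (cpi0 C Y) h = f0 \<and> ccomp C (cpi1 C Y) h = f1)"

definition ssum :: "('o,'a) rcat \<Rightarrow> 'o \<Rightarrow> 'o \<Rightarrow> 'a \<Rightarrow> 'a \<Rightarrow> 'a" where
  "ssum C X Y f0 f1 = ccomp C (csig C Y) (spair C X Y f0 f1)"

definition iota0 :: "('o,'a) rcat \<Rightarrow> 'o \<Rightarrow> 'a" where
  "iota0 C X = spair C X X (cid C X) (czero C X X)"

definition summability_ax :: "('o,'a) rcat \<Rightarrow> bool" where
  "summability_ax C \<longleftrightarrow>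
    \<comment> \<open>zero morphisms\<close>
    (\<forall>X Y. czero C X Y \<in> chom C X Y) \<and>
    (\<forall>X Y Z f. f \<in> chom C X Y \<longrightarrow> ccomp C (czero C Y Z) f = czero C X Z) \<and>
    (\<forall>X Y Z g. g \<in> chom C Y Z \<longrightarrow> ccomp C g (czero C X Y) = czero C X Z) \<and>
    \<comment> \<open>S is a functor, pi0, pi1, sigma natural, pi0 pi1 jointly monic\<close>
    (\<forall>X Y f. f \<in> chom C X Y \<longrightarrow> cSm C f \<in> chom C (cS C X) (cS C Y)) \<and>
    (\<forall>X. cSm C (cid C X) = cid C (cS C X)) \<and>
    (\<forall>X Y Z f g. f \<in> chom C X Y \<longrightarrow> g \<in> chom C Y Z \<longrightarrow>
        cSm C (ccomp C g f) = ccomp C (cSm C g) (cSm C f)) \<and>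
    (\<forall>X. cpi0 C X \<in> chom C (cS C X) X \<and> cpi1 C X \<in> chom C (cS C X) X \<and> csig C X \<in> chom C (cS C X) X) \<and>
    (\<forall>X Y f. f \<in> chom C X Y \<longrightarrow>
        ccomp C (cpi0 C Y) (cSm C f) = ccomp C f (cpi0 C X) \<and>
        ccomp C (cpi1 C Y) (cSm C f) = ccomp C f (cpi1 C X) \<and>
        ccomp C (csig C Y) (cSm C f) = ccomp C f (csig C X)) \<and>
    (\<forall>X Y h h'. h \<in> chom C X (cS C Y) \<longrightarrow> h' \<in> chom C X (cS C Y) \<longrightarrow>
        ccomp C (cpi0 C Y) h = ccomp C (cpi0 C Y) h' \<longrightarrow>
        ccomp C (cpi1 C Y) h = ccomp C (cpi1 C Y) h' \<longrightarrow> h = h') \<and>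
    \<comment> \<open>homsets are partial commutative monoids\<close>
    (\<forall>X Y f. f \<in> chom C X Y \<longrightarrow>
        summable C X Y f (czero C X Y) \<and> ssum C X Y f (czero C X Y) = f) \<and>
    (\<forall>X Y f g. summable C X Y f g \<longrightarrow> summable C X Y g f \<and> ssum C X Y f g = ssum C X Y g f) \<and>
    (\<forall>X Y f g h. summable C X Y f g \<longrightarrow> summable C X Y (ssum C X Y f g) h \<longrightarrow>
        summable C X Y g h \<and> summable C X Y f (ssum C X Y g h) \<and>
        ssum C X Y (ssum C X Y f g) h = ssum C X Y f (ssum C X Y g h)) \<and>
    \<comment> \<open>composition distributes over sums\<close>
    (\<forall>X Y Z f g k. summable C X Y f g \<longrightarrow> k \<in> chom C Y Z \<longrightarrow>
        summable C X Z (ccomp C k f) (ccomp C k g) \<and>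
        ccomp C k (ssum C X Y f g) = ssum C X Z (ccomp C k f) (ccomp C k g)) \<and>
    (\<forall>W X Y f g k. summable C X Y f g \<longrightarrow> k \<in> chom C W X \<longrightarrow>
        summable C W Y (ccomp C f k) (ccomp C g k) \<and>
        ccomp C (ssum C X Y f g) k = ssum C W Y (ccomp C f k) (ccomp C g k)) \<and>
    \<comment> \<open>tensor distributes over sums\<close>
    (\<forall>X Y X' Y' k. k \<in> chom C X' Y' \<longrightarrow>
        ctensm C (czero C X Y) k = czero C (ctens C X X') (ctens C Y Y') \<and>
        ctensm C k (czero C X Y) = czero C (ctens C X' X) (ctens C Y' Y)) \<and>
    (\<forall>X Y X' Y' f g k. summable C X Y f g \<longrightarrow> k \<in> chom C X' Y' \<longrightarrow>
        summable C (ctens C X X') (ctens C Y Y') (ctensm C f k) (ctensm C g k) \<and>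
        ctensm C (ssum C X Y f g) k = ssum C (ctens C X X') (ctens C Y Y') (ctensm C f k) (ctensm C g k) \<and>
        summable C (ctens C X' X) (ctens C Y' Y) (ctensm C k f) (ctensm C k g) \<and>
        ctensm C k (ssum C X Y f g) = ssum C (ctens C X' X) (ctens C Y' Y) (ctensm C k f) (ctensm C k g)) \<and>
    \<comment> \<open>S preserves products strictly\<close>
    (\<forall>X Y. cS C (cwith C X Y) = cwith C (cS C X) (cS C Y) \<and>
        cSm C (cp0 C X Y) = cp0 C (cS C X) (cS C Y) \<and>
        cSm C (cp1 C X Y) = cp1 C (cS C X) (cS C Y)) \<and>
    cS C (ctop C) = ctop C \<and>
    \<comment> \<open>tau\<close>
    (\<forall>X. ctau C X \<in> chom C (cS C (cS C X)) (cS C X) \<and>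
        ccomp C (cpi0 C X) (ctau C X) = ccomp C (cpi0 C X) (cpi0 C (cS C X)) \<and>
        summable C (cS C (cS C X)) X (ccomp C (cpi1 C X) (cpi0 C (cS C X)))
                                     (ccomp C (cpi0 C X) (cpi1 C (cS C X))) \<and>
        ccomp C (cpi1 C X) (ctau C X) = ssum C (cS C (cS C X)) X
              (ccomp C (cpi1 C X) (cpi0 C (cS C X))) (ccomp C (cpi0 C X) (cpi1 C (cS C X)))) \<and>
    (\<forall>X Y f. f \<in> chom C X Y \<longrightarrow>
        ccomp C (ctau C Y) (cSm C (cSm C f)) = ccomp C (cSm C f) (ctau C X)) \<and>
    \<comment> \<open>flip c\<close>
    (\<forall>X. cflip C X \<in> chom C (cS C (cS C X)) (cS C (cS C X)) \<and>
        ccomp C (cpi0 C X) (ccomp C (cpi0 C (cS C X)) (cflip C X)) = ccomp C (cpi0 C X) (cpi0 C (cS C X)) \<and>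
        ccomp C (cpi0 C X) (ccomp C (cpi1 C (cS C X)) (cflip C X)) = ccomp C (cpi1 C X) (cpi0 C (cS C X)) \<and>
        ccomp C (cpi1 C X) (ccomp C (cpi0 C (cS C X)) (cflip C X)) = ccomp C (cpi0 C X) (cpi1 C (cS C X)) \<and>
        ccomp C (cpi1 C X) (ccomp C (cpi1 C (cS C X)) (cflip C X)) = ccomp C (cpi1 C X) (cpi1 C (cS C X))) \<and>
    \<comment> \<open>L\<close>
    (\<forall>X Y. cL C X Y \<in> chom C (ctens C (cS C X) (cS C Y)) (cS C (ctens C X Y)) \<and>
        ccomp C (cpi0 C (ctens C X Y)) (cL C X Y) = ctensm C (cpi0 C X) (cpi0 C Y) \<and>
        summable C (ctens C (cS C X) (cS C Y)) (ctens C X Y)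
           (ctensm C (cpi1 C X) (cpi0 C Y)) (ctensm C (cpi0 C X) (cpi1 C Y)) \<and>
        ccomp C (cpi1 C (ctens C X Y)) (cL C X Y) = ssum C (ctens C (cS C X) (cS C Y)) (ctens C X Y)
           (ctensm C (cpi1 C X) (cpi0 C Y)) (ctensm C (cpi0 C X) (cpi1 C Y)))"

definition diff_ax :: "('o,'a) rcat \<Rightarrow> bool" where
  "diff_ax C \<longleftrightarrow>
    (\<forall>X. cdiff C X \<in> chom C (cbang C (cS C X)) (cS C (cbang C X))) \<and>
    (\<forall>X Y f. f \<in> chom C X Y \<longrightarrow>
        ccomp C (cdiff C Y) (cbangm C (cSm C f)) = ccomp C (cSm C (cbangm C f)) (cdiff C X)) \<and>
    (\<forall>X. ccomp C (cpi0 C (cbang C X)) (cdiff C X) = cbangm C (cpi0 C X)) \<and>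
    (\<forall>X. ccomp C (cdiff C X) (cbangm C (iota0 C X)) = iota0 C (cbang C X)) \<and>
    (\<forall>X. ccomp C (ctau C (cbang C X)) (ccomp C (cSm C (cdiff C X)) (cdiff C (cS C X)))
        = ccomp C (cdiff C X) (cbangm C (ctau C X))) \<and>
    (\<forall>X. ccomp C (cSm C (cder C X)) (cdiff C X) = cder C (cS C X)) \<and>
    (\<forall>X. ccomp C (cSm C (cdig C X)) (cdiff C X)
        = ccomp C (cdiff C (cbang C X)) (ccomp C (cbangm C (cdiff C X)) (cdig C (cS C X)))) \<and>
    ccomp C (cSm C (invm C (cunit C) (cbang C (ctop C)) (cm0 C))) (cdiff C (ctop C))
      = ccomp C (iota0 C (cunit C))
          (ccomp C (invm C (cunit C) (cbang C (ctop C)) (cm0 C)) (cbangm C (czero C (ctop C) (ctop C)))) \<and>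
    (\<forall>X0 X1.
       ccomp C (cSm C (invm C (ctens C (cbang C X0) (cbang C X1)) (cbang C (cwith C X0 X1)) (cm2 C X0 X1)))
               (cdiff C (cwith C X0 X1))
       = ccomp C (cL C (cbang C X0) (cbang C X1))
           (ccomp C (ctensm C (cdiff C X0) (cdiff C X1))
              (invm C (ctens C (cbang C (cS C X0)) (cbang C (cS C X1)))
                      (cbang C (cwith C (cS C X0) (cS C X1))) (cm2 C (cS C X0) (cS C X1))))) \<and>
    (\<forall>X. ccomp C (cflip C (cbang C X)) (ccomp C (cSm C (cdiff C X)) (cdiff C (cS C X)))
        = ccomp C (cSm C (cdiff C X)) (ccomp C (cdiff C (cS C X)) (cbangm C (cflip C X))))"

definition cdsrc :: "('o,'a) rcat \<Rightarrow> bool" where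
  "cdsrc C \<longleftrightarrow> category_ax C \<and> smc_ax C \<and> products_ax C \<and> comonad_ax C \<and>
     seely_ax C \<and> summability_ax C \<and> diff_ax C"

fun wN :: "('o,'a) rcat \<Rightarrow> 'o list \<Rightarrow> 'o" where
  "wN C [] = ctop C"
| "wN C [X] = X"
| "wN C (X # Y # Zs) = cwith C X (wN C (Y # Zs))"

fun tN :: "('o,'a) rcat \<Rightarrow> 'o list \<Rightarrow> 'o" where
  "tN C [] = cunit C"
| "tN C [X] = X"
| "tN C (X # Y # Zs) = ctens C X (tN C (Y # Zs))"

fun tmN :: "('o,'a) rcat \<Rightarrow> 'a list \<Rightarrow> 'a" where
  "tmN C [] = cid C (cunit C)"
| "tmN C [f] = f"
| "tmN C (f # g # hs) = ctensm C f (tmN C (g # hs))"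

fun mN :: "('o,'a) rcat \<Rightarrow> 'o list \<Rightarrow> 'a" where
  "mN C [] = cm0 C"
| "mN C [X] = cid C (cbang C X)"
| "mN C (X # Y # Zs) = ccomp C (cm2 C X (wN C (Y # Zs)))
                          (ctensm C (cid C (cbang C X)) (mN C (Y # Zs)))"

definition Mlin :: "('o,'a) rcat \<Rightarrow> 'o list \<Rightarrow> 'a \<Rightarrow> 'a" where
  "Mlin C Xs l = ccomp C l (ccomp C (tmN C (map (cder C) Xs))
      (invm C (tN C (map (cbang C) Xs)) (cbang C (wN C Xs)) (mN C Xs)))"

definition nlinear :: "('o,'a) rcat \<Rightarrow> 'o list \<Rightarrow> 'o \<Rightarrow> 'a \<Rightarrow> bool" where
  "nlinear C Xs Y f \<longleftrightarrow> (\<exists>l \<in> chom C (tN C Xs) Y. f = Mlin C Xs l)"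

text \<open>The functor D on the Kleisli category: D f = S f o partial_X, for f in L_!(X,Y).\<close>
definition Dk :: "('o,'a) rcat \<Rightarrow> 'o \<Rightarrow> 'a \<Rightarrow> 'a" where
  "Dk C X f = ccomp C (cSm C f) (cdiff C X)"

end

theory Submission imports Defs begin

locale cd = fixes C :: "('o,'a) rcat" assumes ax: "cdsrc C"
begin

abbreviation cmp (infixr "\<cdot>" 55) where "g \<cdot> f \<equiv> ccomp C g f"
abbreviation tm (infixr "\<otimes>" 60) where "f \<otimes> g \<equiv> ctensm C f g"
abbreviation hom where "hom \<equiv> chom C"

lemma cat: "category_ax C" and smc: "smc_ax C" and prod: "products_ax C"
  and com: "comonad_ax C" and see: "seely_ax C" and sm: "summability_ax C" and df: "diff_ax C"
  using ax unfolding cdsrc_def by auto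

lemma id_hom[intro,simp]: "cid C X \<in> hom X X" using cat unfolding category_ax_def by (elim conjE) metis
lemma comp_hom[intro]: "f \<in> hom X Y \<Longrightarrow> g \<in> hom Y Z \<Longrightarrow> g \<cdot> f \<in> hom X Z"
  using cat unfolding category_ax_def by (elim conjE) metis
lemma idr: "f \<in> hom X Y \<Longrightarrow> f \<cdot> cid C X = f" using cat unfolding category_ax_def by (elim conjE) metis
lemma idl: "f \<in> hom X Y \<Longrightarrow> cid C Y \<cdot> f = f" using cat unfolding category_ax_def by (elim conjE) metis
lemma assoc: "f \<in> hom W X \<Longrightarrow> g \<in> hom X Y \<Longrightarrow> h \<in> hom Y Z \<Longrightarrow> h \<cdot> (g \<cdot> f) = (h \<cdot> g) \<cdot> f"
  using cat unfolding category_ax_def by (elim conjE) metis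

lemma tens_hom[intro]: "f \<in> hom X Y \<Longrightarrow> g \<in> hom X' Y' \<Longrightarrow> f \<otimes> g \<in> hom (ctens C X X') (ctens C Y Y')"
  using smc unfolding smc_ax_def by (elim conjE) metis
lemma tens_id[simp]: "cid C X \<otimes> cid C Y = cid C (ctens C X Y)"
  using smc unfolding smc_ax_def by (elim conjE) metis
lemma tens_comp: "f \<in> hom X Y \<Longrightarrow> g \<in> hom Y Z \<Longrightarrow> f' \<in> hom X' Y' \<Longrightarrow> g' \<in> hom Y' Z' \<Longrightarrow>
    (g \<cdot> f) \<otimes> (g' \<cdot> f') = (g \<otimes> g') \<cdot> (f \<otimes> f')"
  using smc unfolding smc_ax_def by (elim conjE) metis

lemma bang_hom[intro]: "f \<in> hom X Y \<Longrightarrow> cbangm C f \<in> hom (cbang C X) (cbang C Y)"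
  using com unfolding comonad_ax_def by (elim conjE) metis
lemma der_hom[intro,simp]: "cder C X \<in> hom (cbang C X) X"
  using com unfolding comonad_ax_def by (elim conjE) metis

lemma zero_hom[intro,simp]: "czero C X Y \<in> hom X Y" using sm unfolding summability_ax_def by (elim conjE) metis
lemma S_hom[intro]: "f \<in> hom X Y \<Longrightarrow> cSm C f \<in> hom (cS C X) (cS C Y)"
  using sm unfolding summability_ax_def by (elim conjE) metis
lemma S_id[simp]: "cSm C (cid C X) = cid C (cS C X)" using sm unfolding summability_ax_def by (elim conjE) metis
lemma S_comp: "f \<in> hom X Y \<Longrightarrow> g \<in> hom Y Z \<Longrightarrow> cSm C (g \<cdot> f) = cSm C g \<cdot> cSm C f"
  using sm unfolding summability_ax_def by (elim conjE) metis
lemma pi0_hom[intro,simp]: "cpi0 C X \<in> hom (cS C X) X" using sm unfolding summability_ax_def by (elim conjE) metis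
lemma pi1_hom[intro,simp]: "cpi1 C X \<in> hom (cS C X) X" using sm unfolding summability_ax_def by (elim conjE) metis
lemma pi0_nat: "f \<in> hom X Y \<Longrightarrow> cpi0 C Y \<cdot> cSm C f = f \<cdot> cpi0 C X"
  using sm unfolding summability_ax_def by (elim conjE) metis
lemma pi1_nat: "f \<in> hom X Y \<Longrightarrow> cpi1 C Y \<cdot> cSm C f = f \<cdot> cpi1 C X"
  using sm unfolding summability_ax_def by (elim conjE) metis
lemma jmono: "h \<in> hom X (cS C Y) \<Longrightarrow> h' \<in> hom X (cS C Y) \<Longrightarrow> cpi0 C Y \<cdot> h = cpi0 C Y \<cdot> h' \<Longrightarrow>
    cpi1 C Y \<cdot> h = cpi1 C Y \<cdot> h' \<Longrightarrow> h = h'"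
  using sm unfolding summability_ax_def by (elim conjE) metis
lemma sum_left: "summable C X Y f g \<Longrightarrow> k \<in> hom Y Z \<Longrightarrow>
        k \<cdot> ssum C X Y f g = ssum C X Z (k \<cdot> f) (k \<cdot> g)"
  using sm unfolding summability_ax_def by (elim conjE) metis
lemma sum_right: "summable C X Y f g \<Longrightarrow> k \<in> hom W X \<Longrightarrow>
        ssum C X Y f g \<cdot> k = ssum C W Y (f \<cdot> k) (g \<cdot> k)"
  using sm unfolding summability_ax_def by (elim conjE) metis
lemma S_with[simp]: "cS C (cwith C X Y) = cwith C (cS C X) (cS C Y)"
  using sm unfolding summability_ax_def by (elim conjE) metis
lemma S_top[simp]: "cS C (ctop C) = ctop C"
  using sm unfolding summability_ax_def by (elim conjE) metis
lemma L_hom[intro,simp]: "cL C X Y \<in> hom (ctens C (cS C X) (cS C Y)) (cS C (ctens C X Y))"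
  using sm unfolding summability_ax_def by (elim conjE) metis
lemma L0: "cpi0 C (ctens C X Y) \<cdot> cL C X Y = cpi0 C X \<otimes> cpi0 C Y"
  using sm unfolding summability_ax_def by (elim conjE) metis
lemma L1s: "summable C (ctens C (cS C X) (cS C Y)) (ctens C X Y)
           (cpi1 C X \<otimes> cpi0 C Y) (cpi0 C X \<otimes> cpi1 C Y)"
  using sm unfolding summability_ax_def by (elim conjE) metis
lemma L1: "cpi1 C (ctens C X Y) \<cdot> cL C X Y = ssum C (ctens C (cS C X) (cS C Y)) (ctens C X Y)
           (cpi1 C X \<otimes> cpi0 C Y) (cpi0 C X \<otimes> cpi1 C Y)"
  using sm unfolding summability_ax_def by (elim conjE) metis

lemma diff_hom[intro,simp]: "cdiff C X \<in> hom (cbang C (cS C X)) (cS C (cbang C X))"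
  using df unfolding diff_ax_def by (elim conjE) metis
lemma diff_der: "cSm C (cder C X) \<cdot> cdiff C X = cder C (cS C X)"
  using df unfolding diff_ax_def by (elim conjE) metis
lemma diff_m2: "cSm C (invm C (ctens C (cbang C X0) (cbang C X1)) (cbang C (cwith C X0 X1)) (cm2 C X0 X1))
               \<cdot> cdiff C (cwith C X0 X1)
       = cL C (cbang C X0) (cbang C X1) \<cdot> (cdiff C X0 \<otimes> cdiff C X1) \<cdot>
              invm C (ctens C (cbang C (cS C X0)) (cbang C (cS C X1)))
                      (cbang C (cwith C (cS C X0) (cS C X1))) (cm2 C (cS C X0) (cS C X1))"
  using df unfolding diff_ax_def by (elim conjE) metis
lemma m2_iso: "is_iso C (ctens C (cbang C X) (cbang C Y)) (cbang C (cwith C X Y)) (cm2 C X Y)"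
  using see unfolding seely_ax_def by (elim conjE) metis
lemma m0_iso: "is_iso C (cunit C) (cbang C (ctop C)) (cm0 C)"
  using see unfolding seely_ax_def by (elim conjE) metis

end

context cd begin

lemma iso_inv: assumes "is_iso C X Y f"
  shows "invm C X Y f \<in> hom Y X" "invm C X Y f \<cdot> f = cid C X" "f \<cdot> invm C X Y f = cid C Y"
proof -
  from assms obtain g where g: "g \<in> hom Y X" "g \<cdot> f = cid C X" "f \<cdot> g = cid C Y" and f: "f \<in> hom X Y"
    unfolding is_iso_def by blast
  have "invm C X Y f = g" unfolding invm_def
  proof (rule the_equality)
    show "g \<in> hom Y X \<and> g \<cdot> f = cid C X \<and> f \<cdot> g = cid C Y" using g by blast
  next
    fix g' assume h: "g' \<in> hom Y X \<and> g' \<cdot> f = cid C X \<and> f \<cdot> g' = cid C Y"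
    have "g' = g' \<cdot> (f \<cdot> g)" using g h idr by metis
    also have "\<dots> = (g' \<cdot> f) \<cdot> g" using assoc[OF g(1) f] h by blast
    also have "\<dots> = g" using h idl g by metis
    finally show "g' = g" .
  qed
  thus "invm C X Y f \<in> hom Y X" "invm C X Y f \<cdot> f = cid C X" "f \<cdot> invm C X Y f = cid C Y" using g by auto
qed

lemma iso_hom: "is_iso C X Y f \<Longrightarrow> f \<in> hom X Y" unfolding is_iso_def by blast

lemma iso_id: "is_iso C X X (cid C X)"
  unfolding is_iso_def using idl[of "cid C X" X X] by blast

lemma iso_comp: assumes "is_iso C X Y f" "is_iso C Y Z g" shows "is_iso C X Z (g \<cdot> f)"
proof -
  from assms obtain f' g' where f: "f \<in> hom X Y" "f' \<in> hom Y X" "f' \<cdot> f = cid C X" "f \<cdot> f' = cid C Y"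
    and g: "g \<in> hom Y Z" "g' \<in> hom Z Y" "g' \<cdot> g = cid C Y" "g \<cdot> g' = cid C Z"
    unfolding is_iso_def by blast
  have "(f' \<cdot> g') \<cdot> (g \<cdot> f) = f' \<cdot> (g' \<cdot> (g \<cdot> f))" using f g by (metis assoc comp_hom)
  also have "\<dots> = f' \<cdot> ((g' \<cdot> g) \<cdot> f)" using f g by (metis assoc)
  also have "\<dots> = cid C X" using f g by (metis idl)
  finally have 1: "(f' \<cdot> g') \<cdot> (g \<cdot> f) = cid C X" .
  have "(g \<cdot> f) \<cdot> (f' \<cdot> g') = g \<cdot> (f \<cdot> (f' \<cdot> g'))" using f g by (metis assoc comp_hom)
  also have "\<dots> = g \<cdot> ((f \<cdot> f') \<cdot> g')" using f g by (metis assoc)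
  also have "\<dots> = cid C Z" using f g by (metis idl)
  finally have 2: "(g \<cdot> f) \<cdot> (f' \<cdot> g') = cid C Z" .
  show ?thesis unfolding is_iso_def using 1 2 f g by blast
qed

lemma iso_tens: assumes "is_iso C X Y f" "is_iso C X' Y' g"
  shows "is_iso C (ctens C X X') (ctens C Y Y') (f \<otimes> g)"
proof -
  from assms obtain f' g' where f: "f \<in> hom X Y" "f' \<in> hom Y X" "f' \<cdot> f = cid C X" "f \<cdot> f' = cid C Y"
    and g: "g \<in> hom X' Y'" "g' \<in> hom Y' X'" "g' \<cdot> g = cid C X'" "g \<cdot> g' = cid C Y'"
    unfolding is_iso_def by blast
  have 1: "(f' \<otimes> g') \<cdot> (f \<otimes> g) = cid C (ctens C X X')"
    using tens_comp[OF f(1) f(2) g(1) g(2)] f g by simp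
  have 2: "(f \<otimes> g) \<cdot> (f' \<otimes> g') = cid C (ctens C Y Y')"
    using tens_comp[OF f(2) f(1) g(2) g(1)] f g by simp
  show ?thesis unfolding is_iso_def using 1 2 f g tens_hom by blast
qed

lemma wN_S: "wN C (map (cS C) Xs) = cS C (wN C Xs)"
  by (induction Xs rule: induct_list012) auto

lemma mN_iso: "is_iso C (tN C (map (cbang C) Xs)) (cbang C (wN C Xs)) (mN C Xs)"
proof (induction Xs rule: induct_list012)
  case 1 then show ?case using m0_iso by simp
next
  case (2 x) then show ?case using iso_id by simp
next
  case (3 x y zs)
  show ?case using iso_comp[OF iso_tens[OF iso_id 3(2)] m2_iso] by simp
qed

lemma tmN_hom: "(\<And>X. X \<in> set Xs \<Longrightarrow> F X \<in> hom (A X) (B X)) \<Longrightarrow>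
   tmN C (map F Xs) \<in> hom (tN C (map A Xs)) (tN C (map B Xs))"
  by (induction Xs rule: induct_list012) auto

lemma tmN_comp: "(\<And>X. X \<in> set Xs \<Longrightarrow> G X \<in> hom (A X) (B X)) \<Longrightarrow>
   (\<And>X. X \<in> set Xs \<Longrightarrow> F X \<in> hom (B X) (D X)) \<Longrightarrow>
   tmN C (map F Xs) \<cdot> tmN C (map G Xs) = tmN C (map (\<lambda>X. F X \<cdot> G X) Xs)"
proof (induction Xs rule: induct_list012)
  case 1 then show ?case by (simp add: idl[OF id_hom])
next
  case (2 x) then show ?case by simp
next
  case (3 x y zs)
  have h1: "tmN C (map G (y # zs)) \<in> hom (tN C (map A (y # zs))) (tN C (map B (y # zs)))"
    by (rule tmN_hom) (use 3 in auto)
  have h2: "tmN C (map F (y # zs)) \<in> hom (tN C (map B (y # zs))) (tN C (map D (y # zs)))"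
    by (rule tmN_hom) (use 3 in auto)
  have "tmN C (map F (x # y # zs)) \<cdot> tmN C (map G (x # y # zs))
     = (F x \<otimes> tmN C (map F (y # zs))) \<cdot> (G x \<otimes> tmN C (map G (y # zs)))" by simp
  also have "\<dots> = (F x \<cdot> G x) \<otimes> (tmN C (map F (y # zs)) \<cdot> tmN C (map G (y # zs)))"
    using tens_comp[OF _ _ h1 h2, of "G x" "A x" "B x" "F x" "D x"] 3(3,4) by simp
  also have "\<dots> = tmN C (map (\<lambda>X. F X \<cdot> G X) (x # y # zs))"
    using 3 by simp
  finally show ?case .
qed

end

context cd begin

lemma L_nat: assumes f: "f \<in> hom X X'" and g: "g \<in> hom Y Y'"
  shows "cSm C (f \<otimes> g) \<cdot> cL C X Y = cL C X' Y' \<cdot> (cSm C f \<otimes> cSm C g)"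
proof (rule jmono)
  have fg: "f \<otimes> g \<in> hom (ctens C X Y) (ctens C X' Y')" using f g by blast
  have Sfg: "cSm C f \<otimes> cSm C g \<in> hom (ctens C (cS C X) (cS C Y)) (ctens C (cS C X') (cS C Y'))"
    using f g by blast
  show "cSm C (f \<otimes> g) \<cdot> cL C X Y \<in> hom (ctens C (cS C X) (cS C Y)) (cS C (ctens C X' Y'))"
    using fg by blast
  show "cL C X' Y' \<cdot> (cSm C f \<otimes> cSm C g) \<in> hom (ctens C (cS C X) (cS C Y)) (cS C (ctens C X' Y'))"
    using Sfg by blast
  have "cpi0 C (ctens C X' Y') \<cdot> (cSm C (f \<otimes> g) \<cdot> cL C X Y)
      = (cpi0 C (ctens C X' Y') \<cdot> cSm C (f \<otimes> g)) \<cdot> cL C X Y"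
    using assoc[OF L_hom S_hom[OF fg] pi0_hom] .
  also have "\<dots> = ((f \<otimes> g) \<cdot> cpi0 C (ctens C X Y)) \<cdot> cL C X Y" using pi0_nat[OF fg] by simp
  also have "\<dots> = (f \<otimes> g) \<cdot> (cpi0 C (ctens C X Y) \<cdot> cL C X Y)"
    using assoc[OF L_hom pi0_hom fg] by simp
  also have "\<dots> = (f \<otimes> g) \<cdot> (cpi0 C X \<otimes> cpi0 C Y)" by (simp add: L0)
  also have "\<dots> = (f \<cdot> cpi0 C X) \<otimes> (g \<cdot> cpi0 C Y)" using tens_comp[OF pi0_hom f pi0_hom g] by simp
  also have "\<dots> = (cpi0 C X' \<cdot> cSm C f) \<otimes> (cpi0 C Y' \<cdot> cSm C g)" using pi0_nat f g by simp
  also have "\<dots> = (cpi0 C X' \<otimes> cpi0 C Y') \<cdot> (cSm C f \<otimes> cSm C g)"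
    using tens_comp[OF S_hom[OF f] pi0_hom S_hom[OF g] pi0_hom] by simp
  also have "\<dots> = (cpi0 C (ctens C X' Y') \<cdot> cL C X' Y') \<cdot> (cSm C f \<otimes> cSm C g)" by (simp add: L0)
  also have "\<dots> = cpi0 C (ctens C X' Y') \<cdot> (cL C X' Y' \<cdot> (cSm C f \<otimes> cSm C g))"
    using assoc[OF Sfg L_hom pi0_hom] by simp
  finally show "cpi0 C (ctens C X' Y') \<cdot> (cSm C (f \<otimes> g) \<cdot> cL C X Y)
      = cpi0 C (ctens C X' Y') \<cdot> (cL C X' Y' \<cdot> (cSm C f \<otimes> cSm C g))" .
  have "cpi1 C (ctens C X' Y') \<cdot> (cSm C (f \<otimes> g) \<cdot> cL C X Y)
      = (cpi1 C (ctens C X' Y') \<cdot> cSm C (f \<otimes> g)) \<cdot> cL C X Y"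
    using assoc[OF L_hom S_hom[OF fg] pi1_hom] .
  also have "\<dots> = ((f \<otimes> g) \<cdot> cpi1 C (ctens C X Y)) \<cdot> cL C X Y" using pi1_nat[OF fg] by simp
  also have "\<dots> = (f \<otimes> g) \<cdot> (cpi1 C (ctens C X Y) \<cdot> cL C X Y)"
    using assoc[OF L_hom pi1_hom fg] by simp
  also have "\<dots> = (f \<otimes> g) \<cdot> ssum C (ctens C (cS C X) (cS C Y)) (ctens C X Y)
           (cpi1 C X \<otimes> cpi0 C Y) (cpi0 C X \<otimes> cpi1 C Y)" by (simp add: L1)
  also have "\<dots> = ssum C (ctens C (cS C X) (cS C Y)) (ctens C X' Y')
           ((f \<otimes> g) \<cdot> (cpi1 C X \<otimes> cpi0 C Y)) ((f \<otimes> g) \<cdot> (cpi0 C X \<otimes> cpi1 C Y))"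
    using sum_left[OF L1s fg] .
  also have "\<dots> = ssum C (ctens C (cS C X) (cS C Y)) (ctens C X' Y')
           ((f \<cdot> cpi1 C X) \<otimes> (g \<cdot> cpi0 C Y)) ((f \<cdot> cpi0 C X) \<otimes> (g \<cdot> cpi1 C Y))"
    using tens_comp[OF pi1_hom f pi0_hom g] tens_comp[OF pi0_hom f pi1_hom g] by simp
  also have "\<dots> = ssum C (ctens C (cS C X) (cS C Y)) (ctens C X' Y')
           ((cpi1 C X' \<cdot> cSm C f) \<otimes> (cpi0 C Y' \<cdot> cSm C g)) ((cpi0 C X' \<cdot> cSm C f) \<otimes> (cpi1 C Y' \<cdot> cSm C g))"
    using pi0_nat pi1_nat f g by simp
  also have "\<dots> = ssum C (ctens C (cS C X) (cS C Y)) (ctens C X' Y')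
           ((cpi1 C X' \<otimes> cpi0 C Y') \<cdot> (cSm C f \<otimes> cSm C g)) ((cpi0 C X' \<otimes> cpi1 C Y') \<cdot> (cSm C f \<otimes> cSm C g))"
    using tens_comp[OF S_hom[OF f] pi1_hom S_hom[OF g] pi0_hom]
      tens_comp[OF S_hom[OF f] pi0_hom S_hom[OF g] pi1_hom] by simp
  also have "\<dots> = ssum C (ctens C (cS C X') (cS C Y')) (ctens C X' Y')
           (cpi1 C X' \<otimes> cpi0 C Y') (cpi0 C X' \<otimes> cpi1 C Y') \<cdot> (cSm C f \<otimes> cSm C g)"
    using sum_right[OF L1s Sfg] by simp
  also have "\<dots> = (cpi1 C (ctens C X' Y') \<cdot> cL C X' Y') \<cdot> (cSm C f \<otimes> cSm C g)" by (simp add: L1)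
  also have "\<dots> = cpi1 C (ctens C X' Y') \<cdot> (cL C X' Y' \<cdot> (cSm C f \<otimes> cSm C g))"
    using assoc[OF Sfg L_hom pi1_hom] by simp
  finally show "cpi1 C (ctens C X' Y') \<cdot> (cSm C (f \<otimes> g) \<cdot> cL C X Y)
      = cpi1 C (ctens C X' Y') \<cdot> (cL C X' Y' \<cdot> (cSm C f \<otimes> cSm C g))" .
qed

fun Ln :: "'o list \<Rightarrow> 'a" where
  "Ln [] = cid C (cunit C)"
| "Ln [X] = cid C (cS C X)"
| "Ln (X # Y # Zs) = cL C X (tN C (Y # Zs)) \<cdot> (cid C (cS C X) \<otimes> Ln (Y # Zs))"

lemma Ln_hom: "Xs \<noteq> [] \<Longrightarrow> Ln Xs \<in> hom (tN C (map (cS C) Xs)) (cS C (tN C Xs))"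
proof (induction Xs rule: induct_list012)
  case (3 x y zs)
  then show ?case using comp_hom[OF tens_hom[OF id_hom 3(2)] L_hom] by simp
qed auto

lemma Ln_nat:
  assumes "Xs \<noteq> []" "\<And>X. X \<in> set Xs \<Longrightarrow> F X \<in> hom (A X) (B X)"
  shows "cSm C (tmN C (map F Xs)) \<cdot> Ln (map A Xs) = Ln (map B Xs) \<cdot> tmN C (map (\<lambda>X. cSm C (F X)) Xs)"
  using assms
proof (induction Xs rule: induct_list012)
  case (2 x)
  then show ?case using idl[OF S_hom] idr[OF S_hom] by simp
next
  case (3 x y zs)
  define r where "r = y # zs"
  have rne: "r \<noteq> []" by (simp add: r_def)
  have Fx: "F x \<in> hom (A x) (B x)" using 3 by simp
  have TF: "tmN C (map F r) \<in> hom (tN C (map A r)) (tN C (map B r))"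
    by (rule tmN_hom) (use 3 in \<open>auto simp: r_def\<close>)
  have TSF: "tmN C (map (\<lambda>X. cSm C (F X)) r) \<in> hom (tN C (map (\<lambda>X. cS C (A X)) r)) (tN C (map (\<lambda>X. cS C (B X)) r))"
    by (rule tmN_hom) (use 3 in \<open>auto simp: r_def\<close>)
  have LA: "Ln (map A r) \<in> hom (tN C (map (\<lambda>X. cS C (A X)) r)) (cS C (tN C (map A r)))"
    using Ln_hom[of "map A r"] rne by (simp add: o_def)
  have LB: "Ln (map B r) \<in> hom (tN C (map (\<lambda>X. cS C (B X)) r)) (cS C (tN C (map B r)))"
    using Ln_hom[of "map B r"] rne by (simp add: o_def)
  have IH: "cSm C (tmN C (map F r)) \<cdot> Ln (map A r) = Ln (map B r) \<cdot> tmN C (map (\<lambda>X. cSm C (F X)) r)"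
    using 3 by (simp add: r_def)
  have e1: "tmN C (map F (x # y # zs)) = F x \<otimes> tmN C (map F r)" by (simp add: r_def)
  have e2: "Ln (map A (x # y # zs)) = cL C (A x) (tN C (map A r)) \<cdot> (cid C (cS C (A x)) \<otimes> Ln (map A r))"
    by (simp add: r_def)
  have e3: "Ln (map B (x # y # zs)) = cL C (B x) (tN C (map B r)) \<cdot> (cid C (cS C (B x)) \<otimes> Ln (map B r))"
    by (simp add: r_def)
  have e4: "tmN C (map (\<lambda>X. cSm C (F X)) (x # y # zs)) = cSm C (F x) \<otimes> tmN C (map (\<lambda>X. cSm C (F X)) r)"
    by (simp add: r_def)
  have FT: "F x \<otimes> tmN C (map F r) \<in> hom (ctens C (A x) (tN C (map A r))) (ctens C (B x) (tN C (map B r)))"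
    using Fx TF by blast
  have iLA: "cid C (cS C (A x)) \<otimes> Ln (map A r) \<in> hom (ctens C (cS C (A x)) (tN C (map (\<lambda>X. cS C (A X)) r)))
      (ctens C (cS C (A x)) (cS C (tN C (map A r))))" using LA by blast
  have iLB: "cid C (cS C (B x)) \<otimes> Ln (map B r) \<in> hom (ctens C (cS C (B x)) (tN C (map (\<lambda>X. cS C (B X)) r)))
      (ctens C (cS C (B x)) (cS C (tN C (map B r))))" using LB by blast
  have SS: "cSm C (F x) \<otimes> cSm C (tmN C (map F r)) \<in> hom (ctens C (cS C (A x)) (cS C (tN C (map A r))))
      (ctens C (cS C (B x)) (cS C (tN C (map B r))))" using Fx TF by blast
  have SS2: "cSm C (F x) \<otimes> tmN C (map (\<lambda>X. cSm C (F X)) r) \<in> hom (ctens C (cS C (A x)) (tN C (map (\<lambda>X. cS C (A X)) r)))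
      (ctens C (cS C (B x)) (tN C (map (\<lambda>X. cS C (B X)) r)))" using Fx TSF by blast
  have "cSm C (F x \<otimes> tmN C (map F r)) \<cdot> (cL C (A x) (tN C (map A r)) \<cdot> (cid C (cS C (A x)) \<otimes> Ln (map A r)))
      = (cSm C (F x \<otimes> tmN C (map F r)) \<cdot> cL C (A x) (tN C (map A r))) \<cdot> (cid C (cS C (A x)) \<otimes> Ln (map A r))"
    using assoc[OF iLA L_hom S_hom[OF FT]] .
  also have "\<dots> = (cL C (B x) (tN C (map B r)) \<cdot> (cSm C (F x) \<otimes> cSm C (tmN C (map F r)))) \<cdot> (cid C (cS C (A x)) \<otimes> Ln (map A r))"
    using L_nat[OF Fx TF] by simp
  also have "\<dots> = cL C (B x) (tN C (map B r)) \<cdot> ((cSm C (F x) \<otimes> cSm C (tmN C (map F r))) \<cdot> (cid C (cS C (A x)) \<otimes> Ln (map A r)))"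
    using assoc[OF iLA SS L_hom] by simp
  also have "(cSm C (F x) \<otimes> cSm C (tmN C (map F r))) \<cdot> (cid C (cS C (A x)) \<otimes> Ln (map A r))
      = (cSm C (F x) \<cdot> cid C (cS C (A x))) \<otimes> (cSm C (tmN C (map F r)) \<cdot> Ln (map A r))"
    using tens_comp[OF id_hom S_hom[OF Fx] LA S_hom[OF TF]] by simp
  also have "\<dots> = (cid C (cS C (B x)) \<cdot> cSm C (F x)) \<otimes> (Ln (map B r) \<cdot> tmN C (map (\<lambda>X. cSm C (F X)) r))"
    using IH idl[OF S_hom[OF Fx]] idr[OF S_hom[OF Fx]] by simp
  also have "\<dots> = (cid C (cS C (B x)) \<otimes> Ln (map B r)) \<cdot> (cSm C (F x) \<otimes> tmN C (map (\<lambda>X. cSm C (F X)) r))"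
    using tens_comp[OF S_hom[OF Fx] id_hom TSF LB] by simp
  also have "cL C (B x) (tN C (map B r)) \<cdot> ((cid C (cS C (B x)) \<otimes> Ln (map B r)) \<cdot> (cSm C (F x) \<otimes> tmN C (map (\<lambda>X. cSm C (F X)) r)))
     = (cL C (B x) (tN C (map B r)) \<cdot> (cid C (cS C (B x)) \<otimes> Ln (map B r))) \<cdot> (cSm C (F x) \<otimes> tmN C (map (\<lambda>X. cSm C (F X)) r))"
    using assoc[OF SS2 iLB L_hom] .
  finally show ?case unfolding e1 e2 e3 e4 .
qed simp

lemma diff_m2': "cdiff C (cwith C X0 X1) \<cdot> cm2 C (cS C X0) (cS C X1)
   = cSm C (cm2 C X0 X1) \<cdot> (cL C (cbang C X0) (cbang C X1) \<cdot> (cdiff C X0 \<otimes> cdiff C X1))"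
proof -
  let ?m = "cm2 C X0 X1" and ?mi = "invm C (ctens C (cbang C X0) (cbang C X1)) (cbang C (cwith C X0 X1)) (cm2 C X0 X1)"
  let ?m' = "cm2 C (cS C X0) (cS C X1)"
  let ?mi' = "invm C (ctens C (cbang C (cS C X0)) (cbang C (cS C X1))) (cbang C (cwith C (cS C X0) (cS C X1))) (cm2 C (cS C X0) (cS C X1))"
  let ?d = "cdiff C (cwith C X0 X1)"
  let ?L = "cL C (cbang C X0) (cbang C X1)"
  let ?dd = "cdiff C X0 \<otimes> cdiff C X1"
  have m: "?m \<in> hom (ctens C (cbang C X0) (cbang C X1)) (cbang C (cwith C X0 X1))" using iso_hom[OF m2_iso] .
  have mi: "?mi \<in> hom (cbang C (cwith C X0 X1)) (ctens C (cbang C X0) (cbang C X1))" using iso_inv(1)[OF m2_iso] .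
  have m': "?m' \<in> hom (ctens C (cbang C (cS C X0)) (cbang C (cS C X1))) (cbang C (cwith C (cS C X0) (cS C X1)))"
    using iso_hom[OF m2_iso] .
  have mi': "?mi' \<in> hom (cbang C (cwith C (cS C X0) (cS C X1))) (ctens C (cbang C (cS C X0)) (cbang C (cS C X1)))"
    using iso_inv(1)[OF m2_iso] .
  have d: "?d \<in> hom (cbang C (cwith C (cS C X0) (cS C X1))) (cS C (cbang C (cwith C X0 X1)))"
    using diff_hom[of "cwith C X0 X1"] by simp
  have dd: "?dd \<in> hom (ctens C (cbang C (cS C X0)) (cbang C (cS C X1))) (ctens C (cS C (cbang C X0)) (cS C (cbang C X1)))"
    by blast
  have Ldd: "?L \<cdot> ?dd \<in> hom (ctens C (cbang C (cS C X0)) (cbang C (cS C X1))) (cS C (ctens C (cbang C X0) (cbang C X1)))"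
    using dd by blast
  have dm: "?d \<cdot> ?m' \<in> hom (ctens C (cbang C (cS C X0)) (cbang C (cS C X1))) (cS C (cbang C (cwith C X0 X1)))"
    using d m' by blast
  have "?d \<cdot> ?m' = cid C (cS C (cbang C (cwith C X0 X1))) \<cdot> (?d \<cdot> ?m')" using idl[OF dm] by simp
  also have "cid C (cS C (cbang C (cwith C X0 X1))) = cSm C ?m \<cdot> cSm C ?mi"
    using S_comp[OF mi m] iso_inv(3)[OF m2_iso] by simp
  also have "(cSm C ?m \<cdot> cSm C ?mi) \<cdot> (?d \<cdot> ?m') = cSm C ?m \<cdot> (cSm C ?mi \<cdot> (?d \<cdot> ?m'))"
    using assoc[OF dm S_hom[OF mi] S_hom[OF m]] by simp
  also have "cSm C ?mi \<cdot> (?d \<cdot> ?m') = (cSm C ?mi \<cdot> ?d) \<cdot> ?m'"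
    using assoc[OF m' d S_hom[OF mi]] .
  also have "\<dots> = (?L \<cdot> ?dd \<cdot> ?mi') \<cdot> ?m'" using diff_m2 by simp
  also have "\<dots> = (?L \<cdot> ?dd) \<cdot> (?mi' \<cdot> ?m')"
    using assoc[OF mi' dd L_hom] assoc[OF m' mi' Ldd] by simp
  also have "\<dots> = ?L \<cdot> ?dd" using iso_inv(2)[OF m2_iso] idr[OF Ldd] by simp
  finally show ?thesis .
qed

lemma diff_mN: "Xs \<noteq> [] \<Longrightarrow> cdiff C (wN C Xs) \<cdot> mN C (map (cS C) Xs)
   = cSm C (mN C Xs) \<cdot> (Ln (map (cbang C) Xs) \<cdot> tmN C (map (cdiff C) Xs))"
proof (induction Xs rule: induct_list012)
  case (2 x)
  have d: "cdiff C x \<in> hom (cbang C (cS C x)) (cS C (cbang C x))" by simp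
  show ?case using idr[OF d] idl[OF d] idl[OF comp_hom[OF d id_hom]] by simp
next
  case (3 x y zs)
  define r where "r = y # zs"
  have rne: "r \<noteq> []" by (simp add: r_def)
  define W where "W = wN C r"
  let ?M'r = "mN C (map (cS C) r)" and ?Mr = "mN C r" and ?T = "tmN C (map (cdiff C) r)"
    and ?Ln = "Ln (map (cbang C) r)"
  let ?dx = "cdiff C x" and ?dW = "cdiff C W"
  let ?m2 = "cm2 C x W" and ?m2' = "cm2 C (cS C x) (cS C W)"
  let ?L = "cL C (cbang C x) (tN C (map (cbang C) r))" and ?L' = "cL C (cbang C x) (cbang C W)"
  have IH: "?dW \<cdot> ?M'r = cSm C ?Mr \<cdot> (?Ln \<cdot> ?T)" using 3 by (simp add: r_def W_def)
  have M'r: "?M'r \<in> hom (tN C (map (\<lambda>X. cbang C (cS C X)) r)) (cbang C (cS C W))"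
    using iso_hom[OF mN_iso[of "map (cS C) r"]] by (simp add: o_def wN_S W_def)
  have Mr: "?Mr \<in> hom (tN C (map (cbang C) r)) (cbang C W)"
    using iso_hom[OF mN_iso[of r]] by (simp add: W_def)
  have T: "?T \<in> hom (tN C (map (\<lambda>X. cbang C (cS C X)) r)) (tN C (map (\<lambda>X. cS C (cbang C X)) r))"
    by (rule tmN_hom) simp
  have Lnr: "?Ln \<in> hom (tN C (map (\<lambda>X. cS C (cbang C X)) r)) (cS C (tN C (map (cbang C) r)))"
    using Ln_hom[of "map (cbang C) r"] rne by (simp add: o_def)
  have dx: "?dx \<in> hom (cbang C (cS C x)) (cS C (cbang C x))" by simp
  have dW: "?dW \<in> hom (cbang C (cS C W)) (cS C (cbang C W))" by simp
  have m2: "?m2 \<in> hom (ctens C (cbang C x) (cbang C W)) (cbang C (cwith C x W))" using iso_hom[OF m2_iso] .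
  have m2': "?m2' \<in> hom (ctens C (cbang C (cS C x)) (cbang C (cS C W))) (cbang C (cwith C (cS C x) (cS C W)))"
    using iso_hom[OF m2_iso] .
  have dxW: "cdiff C (cwith C x W) \<in> hom (cbang C (cwith C (cS C x) (cS C W))) (cS C (cbang C (cwith C x W)))"
    using diff_hom[of "cwith C x W"] by simp
  have iM': "cid C (cbang C (cS C x)) \<otimes> ?M'r \<in> hom (ctens C (cbang C (cS C x)) (tN C (map (\<lambda>X. cbang C (cS C X)) r)))
     (ctens C (cbang C (cS C x)) (cbang C (cS C W)))" using M'r by blast
  have dd: "?dx \<otimes> ?dW \<in> hom (ctens C (cbang C (cS C x)) (cbang C (cS C W))) (ctens C (cS C (cbang C x)) (cS C (cbang C W)))"
    using dx dW by blast
  have Ldd: "?L' \<cdot> (?dx \<otimes> ?dW) \<in> hom (ctens C (cbang C (cS C x)) (cbang C (cS C W))) (cS C (ctens C (cbang C x) (cbang C W)))"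
    using dd by blast
  have LT: "?Ln \<cdot> ?T \<in> hom (tN C (map (\<lambda>X. cbang C (cS C X)) r)) (cS C (tN C (map (cbang C) r)))"
    using T Lnr by blast
  have SLT: "cSm C ?Mr \<cdot> (?Ln \<cdot> ?T) \<in> hom (tN C (map (\<lambda>X. cbang C (cS C X)) r)) (cS C (cbang C W))"
    using LT S_hom[OF Mr] by blast
  have e1: "mN C (map (cS C) (x # y # zs)) = ?m2' \<cdot> (cid C (cbang C (cS C x)) \<otimes> ?M'r)"
    by (simp add: r_def W_def wN_S[symmetric])
  have e2: "wN C (x # y # zs) = cwith C x W" by (simp add: r_def W_def)
  have e3: "mN C (x # y # zs) = ?m2 \<cdot> (cid C (cbang C x) \<otimes> ?Mr)" by (simp add: r_def W_def)
  have e4: "Ln (map (cbang C) (x # y # zs)) = ?L \<cdot> (cid C (cS C (cbang C x)) \<otimes> ?Ln)" by (simp add: r_def)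
  have e5: "tmN C (map (cdiff C) (x # y # zs)) = ?dx \<otimes> ?T" by (simp add: r_def)
  have core: "(?dx \<otimes> ?dW) \<cdot> (cid C (cbang C (cS C x)) \<otimes> ?M'r) = ?dx \<otimes> (cSm C ?Mr \<cdot> (?Ln \<cdot> ?T))"
    using tens_comp[OF id_hom dx M'r dW] idr[OF dx] IH by simp
  have "cdiff C (cwith C x W) \<cdot> (?m2' \<cdot> (cid C (cbang C (cS C x)) \<otimes> ?M'r))
      = (cdiff C (cwith C x W) \<cdot> ?m2') \<cdot> (cid C (cbang C (cS C x)) \<otimes> ?M'r)"
    using assoc[OF iM' m2' dxW] .
  also have "\<dots> = (cSm C ?m2 \<cdot> (?L' \<cdot> (?dx \<otimes> ?dW))) \<cdot> (cid C (cbang C (cS C x)) \<otimes> ?M'r)"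
    using diff_m2' by simp
  also have "\<dots> = cSm C ?m2 \<cdot> (?L' \<cdot> ((?dx \<otimes> ?dW) \<cdot> (cid C (cbang C (cS C x)) \<otimes> ?M'r)))"
    using assoc[OF iM' Ldd S_hom[OF m2]] assoc[OF iM' dd L_hom] by simp
  also have "\<dots> = cSm C ?m2 \<cdot> (?L' \<cdot> (?dx \<otimes> (cSm C ?Mr \<cdot> (?Ln \<cdot> ?T))))" using core by simp
  finally have LHS: "cdiff C (cwith C x W) \<cdot> (?m2' \<cdot> (cid C (cbang C (cS C x)) \<otimes> ?M'r))
      = cSm C ?m2 \<cdot> (?L' \<cdot> (?dx \<otimes> (cSm C ?Mr \<cdot> (?Ln \<cdot> ?T))))" .
  have iMr: "cid C (cbang C x) \<otimes> ?Mr \<in> hom (ctens C (cbang C x) (tN C (map (cbang C) r))) (ctens C (cbang C x) (cbang C W))"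
    using Mr by blast
  have iLn: "cid C (cS C (cbang C x)) \<otimes> ?Ln \<in> hom (ctens C (cS C (cbang C x)) (tN C (map (\<lambda>X. cS C (cbang C X)) r)))
     (ctens C (cS C (cbang C x)) (cS C (tN C (map (cbang C) r))))" using Lnr by blast
  have dT: "?dx \<otimes> ?T \<in> hom (ctens C (cbang C (cS C x)) (tN C (map (\<lambda>X. cbang C (cS C X)) r)))
     (ctens C (cS C (cbang C x)) (tN C (map (\<lambda>X. cS C (cbang C X)) r)))" using dx T by blast
  have iLndT: "(cid C (cS C (cbang C x)) \<otimes> ?Ln) \<cdot> (?dx \<otimes> ?T) \<in> hom (ctens C (cbang C (cS C x)) (tN C (map (\<lambda>X. cbang C (cS C X)) r)))
     (ctens C (cS C (cbang C x)) (cS C (tN C (map (cbang C) r))))" using iLn dT by blast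
  have LiLndT: "?L \<cdot> ((cid C (cS C (cbang C x)) \<otimes> ?Ln) \<cdot> (?dx \<otimes> ?T)) \<in> hom (ctens C (cbang C (cS C x)) (tN C (map (\<lambda>X. cbang C (cS C X)) r)))
     (cS C (ctens C (cbang C x) (tN C (map (cbang C) r))))" using iLndT by blast
  have SiM: "cSm C ?Mr \<in> hom (cS C (tN C (map (cbang C) r))) (cS C (cbang C W))" using S_hom[OF Mr] .
  have iSM: "cid C (cS C (cbang C x)) \<otimes> cSm C ?Mr \<in> hom (ctens C (cS C (cbang C x)) (cS C (tN C (map (cbang C) r))))
     (ctens C (cS C (cbang C x)) (cS C (cbang C W)))" using SiM by blast
  have core2: "(cid C (cS C (cbang C x)) \<otimes> cSm C ?Mr) \<cdot> ((cid C (cS C (cbang C x)) \<otimes> ?Ln) \<cdot> (?dx \<otimes> ?T))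
      = ?dx \<otimes> (cSm C ?Mr \<cdot> (?Ln \<cdot> ?T))"
    using tens_comp[OF dx id_hom T Lnr] tens_comp[OF dx id_hom LT SiM] idl[OF dx] by simp
  have "cSm C (?m2 \<cdot> (cid C (cbang C x) \<otimes> ?Mr)) \<cdot> ((?L \<cdot> (cid C (cS C (cbang C x)) \<otimes> ?Ln)) \<cdot> (?dx \<otimes> ?T))
     = (cSm C ?m2 \<cdot> cSm C (cid C (cbang C x) \<otimes> ?Mr)) \<cdot> (?L \<cdot> ((cid C (cS C (cbang C x)) \<otimes> ?Ln) \<cdot> (?dx \<otimes> ?T)))"
    using S_comp[OF iMr m2] assoc[OF dT iLn L_hom] by simp
  also have "\<dots> = cSm C ?m2 \<cdot> ((cSm C (cid C (cbang C x) \<otimes> ?Mr) \<cdot> ?L) \<cdot> ((cid C (cS C (cbang C x)) \<otimes> ?Ln) \<cdot> (?dx \<otimes> ?T)))"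
    using assoc[OF LiLndT S_hom[OF iMr] S_hom[OF m2]] assoc[OF iLndT L_hom S_hom[OF iMr]] by simp
  also have "\<dots> = cSm C ?m2 \<cdot> ((?L' \<cdot> (cid C (cS C (cbang C x)) \<otimes> cSm C ?Mr)) \<cdot> ((cid C (cS C (cbang C x)) \<otimes> ?Ln) \<cdot> (?dx \<otimes> ?T)))"
    using L_nat[OF id_hom Mr] by simp
  also have "\<dots> = cSm C ?m2 \<cdot> (?L' \<cdot> ((cid C (cS C (cbang C x)) \<otimes> cSm C ?Mr) \<cdot> ((cid C (cS C (cbang C x)) \<otimes> ?Ln) \<cdot> (?dx \<otimes> ?T))))"
    using assoc[OF iLndT iSM L_hom] by simp
  also have "\<dots> = cSm C ?m2 \<cdot> (?L' \<cdot> (?dx \<otimes> (cSm C ?Mr \<cdot> (?Ln \<cdot> ?T))))" using core2 by simp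
  finally have RHS: "cSm C (?m2 \<cdot> (cid C (cbang C x) \<otimes> ?Mr)) \<cdot> ((?L \<cdot> (cid C (cS C (cbang C x)) \<otimes> ?Ln)) \<cdot> (?dx \<otimes> ?T))
     = cSm C ?m2 \<cdot> (?L' \<cdot> (?dx \<otimes> (cSm C ?Mr \<cdot> (?Ln \<cdot> ?T))))" .
  show ?case unfolding e1 e2 e3 e4 e5 using LHS RHS by simp
qed simp

lemma main_loc:
  assumes ne: "Xs \<noteq> []" and l: "l \<in> hom (tN C Xs) Y"
  shows "Dk C (wN C Xs) (Mlin C Xs l) = Mlin C (map (cS C) Xs) (cSm C l \<cdot> Ln Xs)"
proof -
  define P where "P = tN C (map (cbang C) Xs)"
  define P' where "P' = tN C (map (cbang C) (map (cS C) Xs))"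
  define Q where "Q = cbang C (wN C Xs)"
  define Q' where "Q' = cbang C (cS C (wN C Xs))"
  define M where "M = mN C Xs"
  define Mi where "Mi = invm C (tN C (map (cbang C) Xs)) (cbang C (wN C Xs)) (mN C Xs)"
  define M' where "M' = mN C (map (cS C) Xs)"
  define Mi' where "Mi' = invm C (tN C (map (cbang C) (map (cS C) Xs))) (cbang C (wN C (map (cS C) Xs))) (mN C (map (cS C) Xs))"
  define T where "T = tmN C (map (cder C) Xs)"
  define T' where "T' = tmN C (map (cder C) (map (cS C) Xs))"
  define Td where "Td = tmN C (map (cdiff C) Xs)"
  define TSd where "TSd = tmN C (map (\<lambda>X. cSm C (cder C X)) Xs)"
  define Lb where "Lb = Ln (map (cbang C) Xs)"
  define d where "d = cdiff C (wN C Xs)"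
  have P'eq: "P' = tN C (map (\<lambda>X. cbang C (cS C X)) Xs)" by (simp add: P'_def o_def)
  have M: "M \<in> hom P Q" using iso_hom[OF mN_iso[of Xs]] by (simp add: M_def P_def Q_def)
  have Mi: "Mi \<in> hom Q P" "Mi \<cdot> M = cid C P" using iso_inv[OF mN_iso[of Xs]] by (simp_all add: Mi_def M_def P_def Q_def)
  have M': "M' \<in> hom P' Q'" using iso_hom[OF mN_iso[of "map (cS C) Xs"]] by (simp only: M'_def P'_def Q'_def wN_S)
  have Mi': "Mi' \<in> hom Q' P'" "M' \<cdot> Mi' = cid C Q'" using iso_inv[OF mN_iso[of "map (cS C) Xs"]]
    by (simp_all only: Mi'_def M'_def P'_def Q'_def wN_S)
  have T: "T \<in> hom P (tN C Xs)" using tmN_hom[of Xs "cder C" "cbang C" "\<lambda>X. X"] by (simp add: T_def P_def)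
  have T': "T' \<in> hom P' (tN C (map (cS C) Xs))"
    using tmN_hom[of "map (cS C) Xs" "cder C" "cbang C" "\<lambda>X. X"] by (simp only: T'_def P'_def map_ident) simp
  have Td: "Td \<in> hom P' (tN C (map (\<lambda>X. cS C (cbang C X)) Xs))"
    unfolding P'eq Td_def by (rule tmN_hom) simp
  have TSd: "TSd \<in> hom (tN C (map (\<lambda>X. cS C (cbang C X)) Xs)) (tN C (map (cS C) Xs))"
    using tmN_hom[of Xs "\<lambda>X. cSm C (cder C X)" "\<lambda>X. cS C (cbang C X)" "cS C"] by (simp add: TSd_def S_hom)
  have Lb: "Lb \<in> hom (tN C (map (\<lambda>X. cS C (cbang C X)) Xs)) (cS C P)"
    using Ln_hom[of "map (cbang C) Xs"] ne by (simp add: Lb_def P_def o_def)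
  have LX: "Ln Xs \<in> hom (tN C (map (cS C) Xs)) (cS C (tN C Xs))" using Ln_hom ne by blast
  have d: "d \<in> hom Q' (cS C Q)" by (simp add: d_def Q'_def Q_def)
  have dM: "d \<cdot> M' = cSm C M \<cdot> (Lb \<cdot> Td)"
    using diff_mN[OF ne] by (simp add: d_def M'_def M_def Lb_def Td_def)
  have nat: "cSm C T \<cdot> Lb = Ln Xs \<cdot> TSd"
    using Ln_nat[OF ne, of "cder C" "cbang C" "\<lambda>X. X"] by (simp add: T_def Lb_def TSd_def)
  have TT: "TSd \<cdot> Td = T'"
  proof -
    have "TSd \<cdot> Td = tmN C (map (\<lambda>X. cSm C (cder C X) \<cdot> cdiff C X) Xs)"
      unfolding TSd_def Td_def
      by (rule tmN_comp[of Xs _ "\<lambda>X. cbang C (cS C X)" "\<lambda>X. cS C (cbang C X)" _ "cS C"]) (auto intro: S_hom)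
    also have "\<dots> = T'" by (simp add: T'_def diff_der o_def)
    finally show ?thesis .
  qed
  have LbTd: "Lb \<cdot> Td \<in> hom P' (cS C P)" using Lb Td by blast
  have dd: "d \<cdot> M' \<in> hom P' (cS C Q)" using d M' by blast
  have key: "cSm C Mi \<cdot> d = (Lb \<cdot> Td) \<cdot> Mi'"
  proof -
    have SMid: "cSm C Mi \<cdot> d \<in> hom Q' (cS C P)" using d S_hom[OF Mi(1)] by blast
    have "cSm C Mi \<cdot> d = (cSm C Mi \<cdot> d) \<cdot> (M' \<cdot> Mi')" using idr[OF SMid] Mi'(2) by simp
    also have "\<dots> = ((cSm C Mi \<cdot> d) \<cdot> M') \<cdot> Mi'" using assoc[OF Mi'(1) M' SMid] .
    also have "(cSm C Mi \<cdot> d) \<cdot> M' = cSm C Mi \<cdot> (d \<cdot> M')" using assoc[OF M' d S_hom[OF Mi(1)]] by simp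
    also have "\<dots> = cSm C Mi \<cdot> (cSm C M \<cdot> (Lb \<cdot> Td))" using dM by simp
    also have "\<dots> = (cSm C Mi \<cdot> cSm C M) \<cdot> (Lb \<cdot> Td)" using assoc[OF LbTd S_hom[OF M] S_hom[OF Mi(1)]] .
    also have "\<dots> = Lb \<cdot> Td" using S_comp[OF M Mi(1)] Mi(2) idl[OF LbTd] by simp
    finally show ?thesis .
  qed
  have ST: "cSm C T \<in> hom (cS C P) (cS C (tN C Xs))" using S_hom[OF T] .
  have Sl: "cSm C l \<in> hom (cS C (tN C Xs)) (cS C Y)" using S_hom[OF l] .
  have TMi: "T \<cdot> Mi \<in> hom Q (tN C Xs)" using T Mi by blast
  have LTd: "Ln Xs \<cdot> TSd \<in> hom (tN C (map (\<lambda>X. cS C (cbang C X)) Xs)) (cS C (tN C Xs))" using LX TSd by blast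
  have "Dk C (wN C Xs) (Mlin C Xs l) = cSm C (l \<cdot> (T \<cdot> Mi)) \<cdot> d"
    by (simp add: Dk_def Mlin_def d_def T_def Mi_def)
  also have "\<dots> = (cSm C l \<cdot> (cSm C T \<cdot> cSm C Mi)) \<cdot> d"
    using S_comp[OF TMi l] S_comp[OF Mi(1) T] by simp
  also have "\<dots> = cSm C l \<cdot> (cSm C T \<cdot> (cSm C Mi \<cdot> d))"
    using assoc[OF d S_hom[OF Mi(1)] ST] assoc[OF d comp_hom[OF S_hom[OF Mi(1)] ST] Sl] by simp
  also have "\<dots> = cSm C l \<cdot> (cSm C T \<cdot> ((Lb \<cdot> Td) \<cdot> Mi'))" using key by simp
  also have "cSm C T \<cdot> ((Lb \<cdot> Td) \<cdot> Mi') = ((cSm C T \<cdot> Lb) \<cdot> Td) \<cdot> Mi'"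
    using assoc[OF Mi'(1) LbTd ST] assoc[OF Td Lb ST] by simp
  also have "\<dots> = ((Ln Xs \<cdot> TSd) \<cdot> Td) \<cdot> Mi'" using nat by simp
  also have "\<dots> = (Ln Xs \<cdot> T') \<cdot> Mi'" using assoc[OF Td TSd LX] TT by simp
  also have "cSm C l \<cdot> ((Ln Xs \<cdot> T') \<cdot> Mi') = (cSm C l \<cdot> Ln Xs) \<cdot> (T' \<cdot> Mi')"
    using assoc[OF Mi'(1) T' LX] assoc[OF comp_hom[OF Mi'(1) T'] LX Sl] by simp
  also have "\<dots> = Mlin C (map (cS C) Xs) (cSm C l \<cdot> Ln Xs)"
    by (simp add: Mlin_def T'_def Mi'_def)
  finally show ?thesis .
qed

lemma main_hom: "Xs \<noteq> [] \<Longrightarrow> l \<in> hom (tN C Xs) Y \<Longrightarrow> cSm C l \<cdot> Ln Xs \<in> hom (tN C (map (cS C) Xs)) (cS C Y)"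
  using Ln_hom S_hom by blast

end

theorem mainTheorem12:
  fixes C :: "('o, 'a) rcat" and Xs :: "'o list" and Y :: 'o and f :: 'a
  assumes "cdsrc C"
    and "Xs \<noteq> []"
    and "nlinear C Xs Y f"
  shows "nlinear C (map (cS C) Xs) (cS C Y) (Dk C (wN C Xs) f)"
proof -
  interpret cd C by unfold_locales (rule assms(1))
  from assms(3) obtain l where l: "l \<in> chom C (tN C Xs) Y" "f = Mlin C Xs l" unfolding nlinear_def by blast
  show ?thesis unfolding nlinear_def l(2) using main_loc[OF assms(2) l(1)] main_hom[OF assms(2) l(1)] by blast
qed

end
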